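(* Let $G$ be a reaction network with one-dimensional stoichiometric subspace, $c^*\in\mathbb R^{s-1}$ a total-constant vector, $g(\kappa;c;x_1)$ and $q(\kappa;x_1)$ as below. If for a rate-constant vector $\kappa^*\in\mathbb R^m_{>0}$, $G$ has a positive steady state $x^*$ in $\mathcal P_{c^*}$, then $\frac{\partial g}{\partial x_1}(\kappa^*;c^*;x_1^* )$ has the same sign as $\frac{\partial q}{\partial x_1}(\kappa^*;x_1^* )$, and $x^*$ is stable if and only if $\frac{\partial q}{\partial x_1}(\kappa^*;x_1^* )<0$.
   Context: A reaction network $G$ has species $X_1,\dots,X_s$ and $m$ reactions $\sum_{i}\alpha_{ij}X_i\to\sum_i\beta_{ij}X_i$, $\alpha_{ij},\beta_{ij}\in\mathbb Z_{\ge0}$, $(\alpha_{1j},\dots,\alpha_{sj})\neq(\beta_{1j},\dots,\beta_{sj})$. $\mathcal N$ has entries $\beta_{ij}-\alpha_{ij}$, $S=\mathrm{im}\,\mathcal N$. For $\kappa\in\mathbb R^m_{>0}$, $f(\kappa;x)=\mathcal N(\kappa_1\prod_i x_i^{\alpha_{i1}},\dots,\kappa_m\prod_i x_i^{\alpha_{im}})^\top$. Since $S$ is one-dimensional, species are labelled so that $\beta_{11}-\alpha_{11}\ne0$, and there are $\lambda_j\ne0$ ($\lambda_1=1$) with $\beta_{ij}-\alpha_{ij}=\lambda_j(\beta_{i1}-\alpha_{i1})$. For $c\in\mathbb R^{s-1}$, $\mathcal P_c=\{x\in\mathbb R^s_{\ge0}:(\beta_{i1}-\alpha_{i1})x_1-(\beta_{11}-\alpha_{11})x_i=c_{i-1},\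 i=2,\dots,s\}$. A steady state is $x\ge0$ with $f(\kappa;x)=0$; positive if $x>0$; nondegenerate if $\mathrm{Jac}_f(x)(S)=S$; stable if nondegenerate and all nonzero eigenvalues of $\mathrm{Jac}_f(x)$ have negative real parts. $g(\kappa;c;x_1)=(\beta_{11}-\alpha_{11})\sum_{j=1}^m\lambda_j\kappa_jx_1^{\alpha_{1j}}\prod_{k=2}^s\big(\frac{\beta_{k1}-\alpha_{k1}}{\beta_{11}-\alpha_{11}}x_1-\frac{c_{k-1}}{\beta_{11}-\alpha_{11}}\big)^{\alpha_{kj}}$. Notation for $c^*$: $A_1=1,B_1=0$, $A_i=\frac{\beta_{i1}-\alpha_{i1}}{\beta_{11}-\alpha_{11}}$, $B_i=-\frac{c^*_{i-1}}{\beta_{11}-\alpha_{11}}$ ($i\ge2$). $[i]=\{k:A_k\ne0,B_k/A_k=B_i/A_i\}$ if $A_i\ne0$, $[i]=\{k:A_k=0\}$ otherwise; species labelled so that $1,\dots,r$ represent the $r$ distinct classes. $\varphi_k=\min_j\sum_{i\in[k]}\alpha_{ij}$, $\gamma_{kj}=\sum_{i\in[k]}\alpha_{ij}-\varphi_k$. $\mathcal J=\{i:A_i\neq0\}$, $\mathcal H=\{k\in\{1,\dots,r\}\cap\mathcal J:\gamma_{k1},\dots,\gamma_{km}\text{ not all equal}\}$. $Y_i(x_1)=(A_ix_1+B_i)/|A_i|$ if $i\in\mathcal J$, $Y_i=1$ otherwise; $\mathcal C_j=\prod_{i\in\mathcal J}|A_i|^{\alpha_{ij}}\prod_{i\notin\mathcal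 J}B_i^{\alpha_{ij}}$; $q(\kappa;x_1)=(\beta_{11}-\alpha_{11})\sum_{j=1}^m\lambda_j\kappa_j\mathcal C_j\prod_{k\in\mathcal H}Y_k(x_1)^{\gamma_{kj}}$. *)

theory Defs
  imports "HOL-Analysis.Analysis" "Jordan_Normal_Form.Char_Poly"
begin

(* Conventions: species indexed 1..s, reactions 1..m (as in the paper).
   alpha i j, beta i j :: nat  are the stoichiometric coefficients of species i in reaction j.
   Concentration vectors and rate-constant vectors are functions nat => real, only their
   values on {1..s} resp. {1..m} matter. c is indexed 1..s-1. *)

definition stoich :: "(nat \<Rightarrow> nat \<Rightarrow> nat) \<Rightarrow> (nat \<Rightarrow> nat \<Rightarrow> nat) \<Rightarrow> nat \<Rightarrow> nat \<Rightarrow> real" where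
  "stoich \<alpha> \<beta> i j = real (\<beta> i j) - real (\<alpha> i j)"

definition rfun :: "(nat \<Rightarrow> nat \<Rightarrow> nat) \<Rightarrow> (nat \<Rightarrow> nat \<Rightarrow> nat) \<Rightarrow> nat \<Rightarrow> nat
    \<Rightarrow> (nat \<Rightarrow> real) \<Rightarrow> (nat \<Rightarrow> real) \<Rightarrow> nat \<Rightarrow> real" where
  "rfun \<alpha> \<beta> s m \<kappa> x i = (\<Sum>j=1..m. stoich \<alpha> \<beta> i j * (\<kappa> j * (\<Prod>l=1..s. x l ^ \<alpha> l j)))"

definition steady_state where
  "steady_state \<alpha> \<beta> s m \<kappa> x \<longleftrightarrow> (\<forall>i\<in>{1..s}. x i \<ge> 0) \<and> (\<forall>i\<in>{1..s}. rfun \<alpha> \<beta> s m \<kappa> x i = 0)"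

definition positive_vec :: "nat \<Rightarrow> (nat \<Rightarrow> real) \<Rightarrow> bool" where
  "positive_vec s x \<longleftrightarrow> (\<forall>i\<in>{1..s}. x i > 0)"

definition jac_entry where
  "jac_entry \<alpha> \<beta> s m \<kappa> x i k = deriv (\<lambda>t. rfun \<alpha> \<beta> s m \<kappa> (x(k := t)) i) (x k)"

(* matrices (0-based in Jordan_Normal_Form, shifted by one) *)
definition stoich_mat :: "(nat \<Rightarrow> nat \<Rightarrow> nat) \<Rightarrow> (nat \<Rightarrow> nat \<Rightarrow> nat) \<Rightarrow> nat \<Rightarrow> nat \<Rightarrow> real mat" where
  "stoich_mat \<alpha> \<beta> s m = mat s m (\<lambda>(i, j). stoich \<alpha> \<beta> (Suc i) (Suc j))"

definition jac_mat :: "(nat \<Rightarrow> nat \<Rightarrow> nat) \<Rightarrow> (nat \<Rightarrow> nat \<Rightarrow> nat) \<Rightarrow> nat \<Rightarrow> nat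
    \<Rightarrow> (nat \<Rightarrow> real) \<Rightarrow> (nat \<Rightarrow> real) \<Rightarrow> real mat" where
  "jac_mat \<alpha> \<beta> s m \<kappa> x = mat s s (\<lambda>(i, k). jac_entry \<alpha> \<beta> s m \<kappa> x (Suc i) (Suc k))"

definition stoich_space :: "(nat \<Rightarrow> nat \<Rightarrow> nat) \<Rightarrow> (nat \<Rightarrow> nat \<Rightarrow> nat) \<Rightarrow> nat \<Rightarrow> nat \<Rightarrow> real vec set" where
  "stoich_space \<alpha> \<beta> s m = {stoich_mat \<alpha> \<beta> s m *\<^sub>v y | y. y \<in> carrier_vec m}"

definition nondegenerate where
  "nondegenerate \<alpha> \<beta> s m \<kappa> x \<longleftrightarrow>
     steady_state \<alpha> \<beta> s m \<kappa> x \<and>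
     (\<lambda>u. jac_mat \<alpha> \<beta> s m \<kappa> x *\<^sub>v u) ` stoich_space \<alpha> \<beta> s m = stoich_space \<alpha> \<beta> s m"

definition stable where
  "stable \<alpha> \<beta> s m \<kappa> x \<longleftrightarrow> nondegenerate \<alpha> \<beta> s m \<kappa> x \<and>
     (\<forall>ev. eigenvalue (map_mat complex_of_real (jac_mat \<alpha> \<beta> s m \<kappa> x)) ev \<and> ev \<noteq> 0 \<longrightarrow> Re ev < 0)"

definition compat_class where
  "compat_class \<alpha> \<beta> s c = {x. (\<forall>i\<in>{1..s}. x i \<ge> 0) \<and>
     (\<forall>i\<in>{2..s}. stoich \<alpha> \<beta> i 1 * x 1 - stoich \<alpha> \<beta> 1 1 * x i = c (i - 1))}"

definition gfun where
  "gfun \<alpha> \<beta> s m lam \<kappa> c x1 = stoich \<alpha> \<beta> 1 1 *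
     (\<Sum>j=1..m. lam j * \<kappa> j * x1 ^ \<alpha> 1 j *
        (\<Prod>k=2..s. (stoich \<alpha> \<beta> k 1 / stoich \<alpha> \<beta> 1 1 * x1 - c (k - 1) / stoich \<alpha> \<beta> 1 1) ^ \<alpha> k j))"

definition Acoef where
  "Acoef \<alpha> \<beta> i = (if i = 1 then 1 else stoich \<alpha> \<beta> i 1 / stoich \<alpha> \<beta> 1 1)"

definition Bcoef where
  "Bcoef \<alpha> \<beta> c i = (if i = 1 then 0 else - c (i - 1) / stoich \<alpha> \<beta> 1 1)"

definition cls where
  "cls \<alpha> \<beta> s c i = (if Acoef \<alpha> \<beta> i \<noteq> 0
     then {k\<in>{1..s}. Acoef \<alpha> \<beta> k \<noteq> 0 \<and> Bcoef \<alpha> \<beta> c k / Acoef \<alpha> \<beta> k = Bcoef \<alpha> \<beta> c i / Acoef \<alpha> \<beta> i}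
     else {k\<in>{1..s}. Acoef \<alpha> \<beta> k = 0})"

definition phi where
  "phi \<alpha> \<beta> s m c k = Min ((\<lambda>j. \<Sum>i\<in>cls \<alpha> \<beta> s c k. \<alpha> i j) ` {1..m})"

definition gam where
  "gam \<alpha> \<beta> s m c k j = (\<Sum>i\<in>cls \<alpha> \<beta> s c k. \<alpha> i j) - phi \<alpha> \<beta> s m c k"

definition Jset where
  "Jset \<alpha> \<beta> s = {i\<in>{1..s}. Acoef \<alpha> \<beta> i \<noteq> 0}"

definition Hset where
  "Hset \<alpha> \<beta> s m r c = {k\<in>{1..r} \<inter> Jset \<alpha> \<beta> s.
      \<not> (\<forall>j\<in>{1..m}. \<forall>j'\<in>{1..m}. gam \<alpha> \<beta> s m c k j = gam \<alpha> \<beta> s m c k j')}"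

definition Yfun where
  "Yfun \<alpha> \<beta> s c i x1 = (if i \<in> Jset \<alpha> \<beta> s
     then (Acoef \<alpha> \<beta> i * x1 + Bcoef \<alpha> \<beta> c i) / \<bar>Acoef \<alpha> \<beta> i\<bar> else 1)"

definition Ccoef where
  "Ccoef \<alpha> \<beta> s c j = (\<Prod>i\<in>Jset \<alpha> \<beta> s. \<bar>Acoef \<alpha> \<beta> i\<bar> ^ \<alpha> i j) *
     (\<Prod>i\<in>{1..s} - Jset \<alpha> \<beta> s. Bcoef \<alpha> \<beta> c i ^ \<alpha> i j)"

definition qfun where
  "qfun \<alpha> \<beta> s m r lam c \<kappa> x1 = stoich \<alpha> \<beta> 1 1 *
     (\<Sum>j=1..m. lam j * \<kappa> j * Ccoef \<alpha> \<beta> s c j *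
        (\<Prod>k\<in>Hset \<alpha> \<beta> s m r c. Yfun \<alpha> \<beta> s c k x1 ^ gam \<alpha> \<beta> s m c k j))"

end

theory Submission imports Defs begin

lemma DL:
  fixes a b :: "nat \<Rightarrow> real" and e :: "nat \<Rightarrow> nat"
  shows "((\<lambda>t. \<Prod>l\<in>S. (a l * t + b l) ^ e l) has_real_derivative
     (\<Sum>k\<in>S. a k * (real (e k) * (a k * t0 + b k) ^ (e k - 1) * (\<Prod>l\<in>S-{k}. (a l * t0 + b l) ^ e l)))) (at t0)"
proof -
  have "((\<lambda>t. \<Prod>l\<in>S. (a l * t + b l) ^ e l) has_real_derivative
     (\<Sum>k\<in>S. (real (e k) * (a k * t0 + b k) ^ (e k - 1) * a k) * (\<Prod>l\<in>S-{k}. (a l * t0 + b l) ^ e l))) (at t0)"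
    by (rule has_field_derivative_prod) (auto intro!: derivative_eq_intros)
  then show ?thesis by (simp add: mult_ac)
qed

definition pd :: "(nat \<Rightarrow> nat \<Rightarrow> nat) \<Rightarrow> nat \<Rightarrow> nat \<Rightarrow> nat \<Rightarrow> (nat \<Rightarrow> real) \<Rightarrow> real" where
  "pd \<alpha> s j k y = real (\<alpha> k j) * y k ^ (\<alpha> k j - 1) * (\<Prod>l\<in>{1..s}-{k}. y l ^ \<alpha> l j)"

lemma pd_cong: "k \<in> {1..s} \<Longrightarrow> (\<And>l. l \<in> {1..s} \<Longrightarrow> y l = z l) \<Longrightarrow> pd \<alpha> s j k y = pd \<alpha> s j k z"
  unfolding pd_def by (auto intro!: prod.cong)

lemma DLs:
  fixes a b :: "nat \<Rightarrow> real"
  shows "((\<lambda>t. \<Prod>l=1..s. (a l * t + b l) ^ \<alpha> l j) has_real_derivative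
     (\<Sum>k=1..s. a k * pd \<alpha> s j k (\<lambda>l. a l * t0 + b l))) (at t0)"
  using DL[of a b "\<lambda>l. \<alpha> l j" "{1..s}" t0] unfolding pd_def by simp

lemma PD:
  fixes y :: "nat \<Rightarrow> real"
  assumes k: "k \<in> {1..s}"
  shows "((\<lambda>t. \<Prod>l=1..s. (y(k:=t)) l ^ \<alpha> l j) has_real_derivative pd \<alpha> s j k y) (at (y k))"
proof -
  define a :: "nat \<Rightarrow> real" where "a = (\<lambda>l. if l = k then 1 else 0)"
  define b where "b = (\<lambda>l. if l = k then 0 else y l)"
  have f: "(\<lambda>t. \<Prod>l=1..s. (y(k:=t)) l ^ \<alpha> l j) = (\<lambda>t. \<Prod>l=1..s. (a l * t + b l) ^ \<alpha> l j)"
    by (auto simp: a_def b_def intro!: prod.cong)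
  have yy: "(\<lambda>l. a l * y k + b l) = y" by (auto simp: a_def b_def)
  have "(\<Sum>k'=1..s. a k' * pd \<alpha> s j k' (\<lambda>l. a l * y k + b l)) = pd \<alpha> s j k y"
  proof -
    have "(\<Sum>k'=1..s. a k' * pd \<alpha> s j k' y) = (\<Sum>k'=1..s. if k' = k then pd \<alpha> s j k' y else 0)"
      by (rule sum.cong) (auto simp: a_def)
    then show ?thesis unfolding yy using k by simp
  qed
  with DLs[of a b \<alpha> j s "y k"] f show ?thesis by simp
qed

lemma jac_entry_eq:
  assumes k: "k \<in> {1..s}"
  shows "jac_entry \<alpha> \<beta> s m \<kappa> x i k = (\<Sum>j=1..m. stoich \<alpha> \<beta> i j * (\<kappa> j * pd \<alpha> s j k x))"
proof -
  have "((\<lambda>t. rfun \<alpha> \<beta> s m \<kappa> (x(k := t)) i) has_real_derivative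
        (\<Sum>j=1..m. stoich \<alpha> \<beta> i j * (\<kappa> j * pd \<alpha> s j k x))) (at (x k))"
    unfolding rfun_def
    by (intro DERIV_sum DERIV_cmult PD k)
  then show ?thesis unfolding jac_entry_def by (rule DERIV_imp_deriv)
qed

lemma rank1_mult:
  fixes vv ww u :: "'a::comm_ring_1 vec"
  assumes "vv \<in> carrier_vec n" "ww \<in> carrier_vec n" "u \<in> carrier_vec n"
  shows "mat n n (\<lambda>(i,k). vv$i * ww$k) *\<^sub>v u = scalar_prod ww u \<cdot>\<^sub>v vv"
  using assms
  by (intro eq_vecI) (auto simp: mult_mat_vec_def scalar_prod_def row_def sum_distrib_left mult_ac intro!: sum.cong)

lemma vec_nz_ex: "u \<in> carrier_vec n \<Longrightarrow> u \<noteq> 0\<^sub>v n \<Longrightarrow> \<exists>i<n. vec_index u i \<noteq> 0"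
  by (metis eq_vecI carrier_vecD index_zero_vec(1) index_zero_vec(2))

lemma eig_rank1:
  fixes vv ww :: "real vec"
  assumes vv: "vv \<in> carrier_vec n" and ww: "ww \<in> carrier_vec n" and nz: "vv \<noteq> 0\<^sub>v n"
  shows "(\<forall>ev. eigenvalue (map_mat complex_of_real (mat n n (\<lambda>(i,k). vec_index vv i * vec_index ww k))) ev \<and> ev \<noteq> 0 \<longrightarrow> Re ev < 0)
     \<longleftrightarrow> (scalar_prod ww vv \<noteq> 0 \<longrightarrow> scalar_prod ww vv < 0)"
proof -
  define vc where "vc = map_vec complex_of_real vv"
  define wc where "wc = map_vec complex_of_real ww"
  define T where "T = scalar_prod ww vv"
  have vcc: "vc \<in> carrier_vec n" and wcc: "wc \<in> carrier_vec n" using vv ww by (auto simp: vc_def wc_def)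
  have M: "map_mat complex_of_real (mat n n (\<lambda>(i,k). vec_index vv i * vec_index ww k)) = mat n n (\<lambda>(i,k). vec_index vc i * vec_index wc k)"
    using vv ww by (auto simp: vc_def wc_def intro!: eq_matI)
  have sp: "scalar_prod wc vc = complex_of_real T"
    using vv ww by (simp add: scalar_prod_def vc_def wc_def T_def)
  obtain i0 where i0: "i0 < n" "vec_index vv i0 \<noteq> 0" using vec_nz_ex[OF vv nz] by blast
  have vcnz: "vc \<noteq> 0\<^sub>v n"
  proof
    assume "vc = 0\<^sub>v n"
    then have "vec_index vc i0 = 0" using i0 by simp
    then show False using i0 vv by (simp add: vc_def)
  qed
  let ?Mc = "mat n n (\<lambda>(i,k). vec_index vc i * vec_index wc k)"
  have Mu: "?Mc *\<^sub>v u = scalar_prod wc u \<cdot>\<^sub>v vc" if "u \<in> carrier_vec n" for u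
    by (rule rank1_mult[OF vcc wcc that])
  show ?thesis unfolding M T_def[symmetric]
  proof
    assume H: "\<forall>ev. eigenvalue ?Mc ev \<and> ev \<noteq> 0 \<longrightarrow> Re ev < 0"
    show "T \<noteq> 0 \<longrightarrow> T < 0"
    proof
      assume T0: "T \<noteq> 0"
      have "eigenvector ?Mc vc (complex_of_real T)"
        unfolding eigenvector_def using vcc vcnz Mu[OF vcc] sp by simp
      then have "eigenvalue ?Mc (complex_of_real T)" unfolding eigenvalue_def by blast
      with H T0 show "T < 0" by auto
    qed
  next
    assume H2: "T \<noteq> 0 \<longrightarrow> T < 0"
    show "\<forall>ev. eigenvalue ?Mc ev \<and> ev \<noteq> 0 \<longrightarrow> Re ev < 0"
    proof (intro allI impI, elim conjE)
      fix ev assume ev: "eigenvalue ?Mc ev" and ev0: "ev \<noteq> 0"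
      then obtain u where u: "u \<in> carrier_vec n" "u \<noteq> 0\<^sub>v n" "?Mc *\<^sub>v u = ev \<cdot>\<^sub>v u"
        unfolding eigenvalue_def eigenvector_def by auto
      have E: "scalar_prod wc u \<cdot>\<^sub>v vc = ev \<cdot>\<^sub>v u" using u Mu by simp
      obtain i1 where i1: "i1 < n" "vec_index u i1 \<noteq> 0" using vec_nz_ex[OF u(1,2)] by blast
      have wu: "scalar_prod wc u \<noteq> 0"
      proof
        assume "scalar_prod wc u = 0"
        then have "vec_index (ev \<cdot>\<^sub>v u) i1 = 0" using E[symmetric] i1 vcc by simp
        then show False using i1 u ev0 by simp
      qed
      have "scalar_prod wc (scalar_prod wc u \<cdot>\<^sub>v vc) = scalar_prod wc (ev \<cdot>\<^sub>v u)" using E by simp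
      then have "scalar_prod wc u * scalar_prod wc vc = ev * scalar_prod wc u"
        using scalar_prod_smult_distrib[OF wcc vcc] scalar_prod_smult_distrib[OF wcc u(1)] by simp
      then have "ev = complex_of_real T" using wu sp by simp
      then show "Re ev < 0" using H2 ev0 by auto
    qed
  qed
qed

lemma img_rank1:
  fixes vv ww :: "real vec"
  assumes vv: "vv \<in> carrier_vec n" and ww: "ww \<in> carrier_vec n" and nz: "vv \<noteq> 0\<^sub>v n"
  shows "((\<lambda>u. mat n n (\<lambda>(i,k). vec_index vv i * vec_index ww k) *\<^sub>v u) ` {t \<cdot>\<^sub>v vv | t. True} = {t \<cdot>\<^sub>v vv | t. True})
     \<longleftrightarrow> scalar_prod ww vv \<noteq> 0"
proof -
  define T where "T = scalar_prod ww vv"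
  have J: "mat n n (\<lambda>(i,k). vec_index vv i * vec_index ww k) *\<^sub>v (t \<cdot>\<^sub>v vv) = (t * T) \<cdot>\<^sub>v vv" for t
    using rank1_mult[OF vv ww, of "t \<cdot>\<^sub>v vv"] vv scalar_prod_smult_distrib[OF ww vv] by (simp add: T_def)
  obtain i0 where i0: "i0 < n" "vec_index vv i0 \<noteq> 0" using vec_nz_ex[OF vv nz] by blast
  show ?thesis unfolding T_def[symmetric]
  proof
    assume H: "(\<lambda>u. mat n n (\<lambda>(i,k). vec_index vv i * vec_index ww k) *\<^sub>v u) ` {t \<cdot>\<^sub>v vv | t. True} = {t \<cdot>\<^sub>v vv | t. True}"
    show "T \<noteq> 0"
    proof
      assume T0: "T = 0"
      have "1 \<cdot>\<^sub>v vv \<in> {t \<cdot>\<^sub>v vv | t. True}" by blast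
      then have "1 \<cdot>\<^sub>v vv \<in> (\<lambda>u. mat n n (\<lambda>(i,k). vec_index vv i * vec_index ww k) *\<^sub>v u) ` {t \<cdot>\<^sub>v vv | t. True}"
        using H by simp
      then obtain t where "1 \<cdot>\<^sub>v vv = (t * T) \<cdot>\<^sub>v vv" using J by auto
      then have "vec_index (1 \<cdot>\<^sub>v vv) i0 = vec_index ((t * T) \<cdot>\<^sub>v vv) i0" by simp
      then show False using i0 vv T0 by simp
    qed
  next
    assume T0: "T \<noteq> 0"
    show "(\<lambda>u. mat n n (\<lambda>(i,k). vec_index vv i * vec_index ww k) *\<^sub>v u) ` {t \<cdot>\<^sub>v vv | t. True} = {t \<cdot>\<^sub>v vv | t. True}"
    proof (intro equalityI subsetI)
      fix y assume "y \<in> (\<lambda>u. mat n n (\<lambda>(i,k). vec_index vv i * vec_index ww k) *\<^sub>v u) ` {t \<cdot>\<^sub>v vv | t. True}"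
      then show "y \<in> {t \<cdot>\<^sub>v vv | t. True}" using J by auto
    next
      fix y assume "y \<in> {t \<cdot>\<^sub>v vv | t. True}"
      then obtain t where y: "y = t \<cdot>\<^sub>v vv" by auto
      have "y = mat n n (\<lambda>(i,k). vec_index vv i * vec_index ww k) *\<^sub>v ((t / T) \<cdot>\<^sub>v vv)"
        using J[of "t / T"] T0 y by simp
      then show "y \<in> (\<lambda>u. mat n n (\<lambda>(i,k). vec_index vv i * vec_index ww k) *\<^sub>v u) ` {t \<cdot>\<^sub>v vv | t. True}"
        by blast
    qed
  qed
qed


theorem lemma5p9:
  fixes \<alpha> \<beta> :: "nat \<Rightarrow> nat \<Rightarrow> nat" and s m r :: nat
    and lam \<kappa> x c :: "nat \<Rightarrow> real"
  assumes "s \<ge> 1" and "m \<ge> 1"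
    and one_dim: "stoich \<alpha> \<beta> 1 1 \<noteq> 0"
    and lam1: "lam 1 = 1" and lam_nz: "\<forall>j\<in>{1..m}. lam j \<noteq> 0"
    and lam_rel: "\<forall>i\<in>{1..s}. \<forall>j\<in>{1..m}. stoich \<alpha> \<beta> i j = lam j * stoich \<alpha> \<beta> i 1"
    and labels: "1 \<le> r" "r \<le> s" "inj_on (cls \<alpha> \<beta> s c) {1..r}"
       "cls \<alpha> \<beta> s c ` {1..s} = cls \<alpha> \<beta> s c ` {1..r}"
    and kpos: "\<forall>j\<in>{1..m}. \<kappa> j > 0"
    and ss: "steady_state \<alpha> \<beta> s m \<kappa> x" and pos: "positive_vec s x"
    and inP: "x \<in> compat_class \<alpha> \<beta> s c"
  shows "sgn (deriv (gfun \<alpha> \<beta> s m lam \<kappa> c) (x 1)) = sgn (deriv (qfun \<alpha> \<beta> s m r lam c \<kappa>) (x 1))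
       \<and> (stable \<alpha> \<beta> s m \<kappa> x \<longleftrightarrow> deriv (qfun \<alpha> \<beta> s m r lam c \<kappa>) (x 1) < 0)"
proof -
  define S1 where "S1 = stoich \<alpha> \<beta> 1 1"
  define a where "a = Acoef \<alpha> \<beta>"
  define b where "b = Bcoef \<alpha> \<beta> c"
  define v where "v = (\<lambda>i. stoich \<alpha> \<beta> i 1)"
  define W where "W = (\<lambda>k. \<Sum>j=1..m. lam j * \<kappa> j * pd \<alpha> s j k x)"
  define T where "T = (\<Sum>k=1..s. v k * W k)"
  have S1nz: "S1 \<noteq> 0" using one_dim S1_def by simp
  have st: "stoich \<alpha> \<beta> i j = lam j * v i" if "i \<in> {1..s}" "j \<in> {1..m}" for i j
    using lam_rel that unfolding v_def by blast
  have jac: "jac_entry \<alpha> \<beta> s m \<kappa> x i k = v i * W k" if i: "i \<in> {1..s}" and k: "k \<in> {1..s}" for i k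
  proof -
    have "jac_entry \<alpha> \<beta> s m \<kappa> x i k = (\<Sum>j=1..m. stoich \<alpha> \<beta> i j * (\<kappa> j * pd \<alpha> s j k x))"
      by (rule jac_entry_eq[OF k])
    also have "\<dots> = (\<Sum>j=1..m. v i * (lam j * \<kappa> j * pd \<alpha> s j k x))"
      by (rule sum.cong) (auto simp: st[OF i])
    also have "\<dots> = v i * W k" by (simp add: W_def sum_distrib_left)
    finally show ?thesis .
  qed
  have av: "S1 * a k = v k" if "k \<in> {1..s}" for k
    using S1nz by (auto simp: a_def Acoef_def v_def S1_def)
  have xlin: "x l = a l * x 1 + b l" if l: "l \<in> {1..s}" for l
  proof (cases "l = 1")
    case True then show ?thesis by (simp add: a_def b_def Acoef_def Bcoef_def)
  next
    case False
    then have "l \<in> {2..s}" using l by auto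
    then have "stoich \<alpha> \<beta> l 1 * x 1 - S1 * x l = c (l - 1)" using inP by (auto simp: compat_class_def S1_def)
    then show ?thesis using False S1nz by (simp add: a_def b_def Acoef_def Bcoef_def S1_def field_simps)
  qed
  have gform: "gfun \<alpha> \<beta> s m lam \<kappa> c = (\<lambda>t. S1 * (\<Sum>j=1..m. lam j * \<kappa> j * (\<Prod>l=1..s. (a l * t + b l) ^ \<alpha> l j)))"
  proof
    fix t
    have "(\<Prod>l=1..s. (a l * t + b l) ^ \<alpha> l j) = t ^ \<alpha> 1 j *
        (\<Prod>k=2..s. (stoich \<alpha> \<beta> k 1 / stoich \<alpha> \<beta> 1 1 * t - c (k - 1) / stoich \<alpha> \<beta> 1 1) ^ \<alpha> k j)" for j
    proof -
      have "(\<Prod>l=1..s. (a l * t + b l) ^ \<alpha> l j) = (a 1 * t + b 1) ^ \<alpha> 1 j * (\<Prod>l=Suc 1..s. (a l * t + b l) ^ \<alpha> l j)"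
        using \<open>s \<ge> 1\<close> by (rule prod.atLeast_Suc_atMost)
      also have "(\<Prod>l=Suc 1..s. (a l * t + b l) ^ \<alpha> l j) = (\<Prod>k=2..s. (stoich \<alpha> \<beta> k 1 / stoich \<alpha> \<beta> 1 1 * t - c (k - 1) / stoich \<alpha> \<beta> 1 1) ^ \<alpha> k j)"
        by (rule prod.cong) (auto simp: a_def b_def Acoef_def Bcoef_def)
      finally show ?thesis by (simp add: a_def b_def Acoef_def Bcoef_def)
    qed
    then show "gfun \<alpha> \<beta> s m lam \<kappa> c t = S1 * (\<Sum>j=1..m. lam j * \<kappa> j * (\<Prod>l=1..s. (a l * t + b l) ^ \<alpha> l j))"
      unfolding gfun_def S1_def by (simp add: mult.assoc)
  qed
  have pdx: "pd \<alpha> s j k (\<lambda>l. a l * x 1 + b l) = pd \<alpha> s j k x" if "k \<in> {1..s}" for j k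
    by (rule pd_cong[OF that]) (metis xlin)
  have gder: "(gfun \<alpha> \<beta> s m lam \<kappa> c has_real_derivative T) (at (x 1))"
  proof -
    have "((\<lambda>t. S1 * (\<Sum>j=1..m. lam j * \<kappa> j * (\<Prod>l=1..s. (a l * t + b l) ^ \<alpha> l j))) has_real_derivative
        S1 * (\<Sum>j=1..m. lam j * \<kappa> j * (\<Sum>k=1..s. a k * pd \<alpha> s j k (\<lambda>l. a l * x 1 + b l)))) (at (x 1))"
      by (intro DERIV_cmult DERIV_sum DLs)
    moreover have "S1 * (\<Sum>j=1..m. lam j * \<kappa> j * (\<Sum>k=1..s. a k * pd \<alpha> s j k (\<lambda>l. a l * x 1 + b l))) = T"
    proof -
      have "S1 * (\<Sum>j=1..m. lam j * \<kappa> j * (\<Sum>k=1..s. a k * pd \<alpha> s j k (\<lambda>l. a l * x 1 + b l)))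
          = S1 * (\<Sum>j=1..m. lam j * \<kappa> j * (\<Sum>k=1..s. a k * pd \<alpha> s j k x))"
        by (intro sum.cong refl arg_cong2[where f=times]) (blast intro: pdx)
      also have "\<dots> = (\<Sum>j=1..m. \<Sum>k=1..s. S1 * a k * (lam j * \<kappa> j * pd \<alpha> s j k x))"
        by (simp add: sum_distrib_left mult_ac)
      also have "\<dots> = (\<Sum>k=1..s. \<Sum>j=1..m. S1 * a k * (lam j * \<kappa> j * pd \<alpha> s j k x))"
        by (rule sum.swap)
      also have "\<dots> = (\<Sum>k=1..s. (S1 * a k) * W k)"
        by (simp add: W_def sum_distrib_left)
      also have "\<dots> = T" unfolding T_def by (rule sum.cong) (auto simp: av)
      finally show ?thesis .
    qed
    ultimately show ?thesis unfolding gform by simp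
  qed
  have dg: "deriv (gfun \<alpha> \<beta> s m lam \<kappa> c) (x 1) = T" using gder by (rule DERIV_imp_deriv)
  define vv where "vv = vec s (\<lambda>i. v (Suc i))"
  define ww where "ww = vec s (\<lambda>k. W (Suc k))"
  have vvc: "vv \<in> carrier_vec s" and wwc: "ww \<in> carrier_vec s" by (auto simp: vv_def ww_def)
  have JM: "jac_mat \<alpha> \<beta> s m \<kappa> x = mat s s (\<lambda>(i,k). vec_index vv i * vec_index ww k)"
    by (auto simp: jac_mat_def vv_def ww_def jac intro!: eq_matI)
  have TT: "scalar_prod ww vv = T"
    unfolding scalar_prod_def T_def using vvc
    by (auto simp: vv_def ww_def atLeast0LessThan mult.commute sum.atLeast1_atMost_eq)
  have vvnz: "vv \<noteq> 0\<^sub>v s"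
  proof
    assume "vv = 0\<^sub>v s"
    then have "vec_index vv 0 = 0" using \<open>s \<ge> 1\<close> by simp
    then show False using \<open>s \<ge> 1\<close> S1nz by (simp add: vv_def v_def S1_def)
  qed
  have SMv: "stoich_mat \<alpha> \<beta> s m *\<^sub>v y = (\<Sum>j<m. lam (Suc j) * vec_index y j) \<cdot>\<^sub>v vv" if y: "y \<in> carrier_vec m" for y
  proof (rule eq_vecI)
    fix i assume "i < dim_vec ((\<Sum>j<m. lam (Suc j) * vec_index y j) \<cdot>\<^sub>v vv)"
    then have i: "i < s" using vvc by simp
    have "vec_index (stoich_mat \<alpha> \<beta> s m *\<^sub>v y) i = (\<Sum>j<m. stoich \<alpha> \<beta> (Suc i) (Suc j) * vec_index y j)"
      using i y by (simp add: stoich_mat_def mult_mat_vec_def scalar_prod_def row_def atLeast0LessThan)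
    also have "\<dots> = (\<Sum>j<m. lam (Suc j) * vec_index y j) * v (Suc i)"
      unfolding sum_distrib_right by (rule sum.cong) (use i in \<open>auto simp: st\<close>)
    finally show "vec_index (stoich_mat \<alpha> \<beta> s m *\<^sub>v y) i = vec_index ((\<Sum>j<m. lam (Suc j) * vec_index y j) \<cdot>\<^sub>v vv) i"
      using i by (simp add: vv_def mult.commute)
  qed (auto simp: stoich_mat_def vv_def)
  have SS: "stoich_space \<alpha> \<beta> s m = {t \<cdot>\<^sub>v vv | t. True}"
  proof (intro equalityI subsetI)
    fix z assume "z \<in> stoich_space \<alpha> \<beta> s m"
    then obtain y where "y \<in> carrier_vec m" "z = stoich_mat \<alpha> \<beta> s m *\<^sub>v y" unfolding stoich_space_def by auto
    then show "z \<in> {t \<cdot>\<^sub>v vv | t. True}" using SMv by auto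
  next
    fix z assume "z \<in> {t \<cdot>\<^sub>v vv | t. True}"
    then obtain t where z: "z = t \<cdot>\<^sub>v vv" by auto
    define y where "y = vec m (\<lambda>j. if j = 0 then t else 0)"
    have yc: "y \<in> carrier_vec m" by (simp add: y_def)
    have "(\<Sum>j<m. lam (Suc j) * vec_index y j) = (\<Sum>j<m. if j = 0 then t else 0)"
      by (rule sum.cong) (use lam1 in \<open>auto simp: y_def\<close>)
    also have "\<dots> = t" using \<open>m \<ge> 1\<close> by simp
    finally have "z = stoich_mat \<alpha> \<beta> s m *\<^sub>v y" using SMv[OF yc] z by simp
    then show "z \<in> stoich_space \<alpha> \<beta> s m" unfolding stoich_space_def using yc by blast
  qed
  have stab: "stable \<alpha> \<beta> s m \<kappa> x \<longleftrightarrow> T < 0"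
    unfolding stable_def nondegenerate_def JM SS
    using ss img_rank1[OF vvc wwc vvnz] eig_rank1[OF vvc wwc vvnz] TT by auto
  define Jst where "Jst = Jset \<alpha> \<beta> s"
  define H where "H = Hset \<alpha> \<beta> s m r c"
  define R where "R = {1..r} \<inter> Jst"
  define Y where "Y = Yfun \<alpha> \<beta> s c"
  define cl where "cl = cls \<alpha> \<beta> s c"
  define ph where "ph = phi \<alpha> \<beta> s m c"
  define gm where "gm = gam \<alpha> \<beta> s m c"
  define pp where "pp = (\<lambda>k. if k \<in> Jst then a k / \<bar>a k\<bar> else 0)"
  define qq where "qq = (\<lambda>k. if k \<in> Jst then b k / \<bar>a k\<bar> else 1)"
  have Jst_eq: "Jst = {i\<in>{1..s}. a i \<noteq> 0}" by (simp add: Jst_def Jset_def a_def)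
  have finJ: "finite Jst" and Jsub: "Jst \<subseteq> {1..s}" by (auto simp: Jst_eq)
  have Yaff: "Y k t = pp k * t + qq k" for k t
    by (simp add: Y_def Yfun_def pp_def qq_def Jst_def a_def b_def add_divide_distrib)
  have YJ: "Y k t = (a k * t + b k) / \<bar>a k\<bar>" if "k \<in> Jst" for k t
    using that by (simp add: Y_def Yfun_def Jst_def a_def b_def)
  have xpos: "x l > 0" if "l \<in> {1..s}" for l using pos that by (simp add: positive_vec_def)
  have Ypos: "Y k (x 1) > 0" if k: "k \<in> Jst" for k
  proof -
    have "k \<in> {1..s}" using k Jsub by auto
    from xlin[OF this] have "a k * x 1 + b k = x k" by linarith
    then show ?thesis using YJ[OF k] xpos k Jsub Jst_eq by auto
  qed
  have F1: "(\<Prod>l=1..s. (a l * t + b l) ^ \<alpha> l j) = Ccoef \<alpha> \<beta> s c j * (\<Prod>l\<in>Jst. Y l t ^ \<alpha> l j)" for t j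
  proof -
    have "(\<Prod>l=1..s. (a l * t + b l) ^ \<alpha> l j) = (\<Prod>l\<in>{1..s} - Jst. (a l * t + b l) ^ \<alpha> l j) * (\<Prod>l\<in>Jst. (a l * t + b l) ^ \<alpha> l j)"
      by (rule prod.subset_diff[OF Jsub]) simp
    also have "(\<Prod>l\<in>{1..s} - Jst. (a l * t + b l) ^ \<alpha> l j) = (\<Prod>l\<in>{1..s} - Jst. b l ^ \<alpha> l j)"
      by (rule prod.cong) (auto simp: Jst_eq)
    also have "(\<Prod>l\<in>Jst. (a l * t + b l) ^ \<alpha> l j) = (\<Prod>l\<in>Jst. \<bar>a l\<bar> ^ \<alpha> l j * Y l t ^ \<alpha> l j)"
    proof (rule prod.cong[OF refl])
      fix l assume l: "l \<in> Jst"
      then have "a l \<noteq> 0" by (simp add: Jst_eq)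
      then show "(a l * t + b l) ^ \<alpha> l j = \<bar>a l\<bar> ^ \<alpha> l j * Y l t ^ \<alpha> l j"
        by (simp add: YJ[OF l] power_mult_distrib[symmetric])
    qed
    also have "\<dots> = (\<Prod>l\<in>Jst. \<bar>a l\<bar> ^ \<alpha> l j) * (\<Prod>l\<in>Jst. Y l t ^ \<alpha> l j)"
      by (rule prod.distrib)
    finally show ?thesis
      by (simp add: Ccoef_def Jst_def[symmetric] a_def[symmetric] b_def[symmetric])
  qed
  have clJ: "cl k = {l \<in> Jst. b l / a l = b k / a k}" if "k \<in> Jst" for k
    using that by (auto simp: cl_def cls_def Jst_eq a_def b_def)
  have clN: "cl k = {l \<in> {1..s}. a l = 0}" if "k \<notin> Jst" "k \<in> {1..s}" for k
    using that by (auto simp: cl_def cls_def Jst_eq a_def)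
  have self: "k \<in> cl k" if "k \<in> {1..s}" for k
    using that by (auto simp: cl_def cls_def)
  have Rsub: "R \<subseteq> Jst" by (auto simp: R_def)
  have cover: "Jst = \<Union>(cl ` R)"
  proof (intro equalityI subsetI)
    fix l assume l: "l \<in> Jst"
    then have l1: "l \<in> {1..s}" using Jsub by auto
    have "cl l \<in> cl ` {1..r}" using labels(4) l1 unfolding cl_def by blast
    then obtain k where k: "k \<in> {1..r}" "cl l = cl k" by auto
    have ks: "k \<in> {1..s}" using k labels(2) by auto
    have "k \<in> Jst"
    proof (rule ccontr)
      assume "k \<notin> Jst"
      then have "cl k = {l \<in> {1..s}. a l = 0}" using clN ks by blast
      then show False using self[OF l1] k(2) l Jst_eq by auto
    qed
    then show "l \<in> \<Union>(cl ` R)" using k self[OF l1] by (auto simp: R_def)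
  next
    fix l assume "l \<in> \<Union>(cl ` R)"
    then obtain k where "k \<in> R" "l \<in> cl k" by auto
    then show "l \<in> Jst" using clJ Rsub by auto
  qed
  have disj: "cl k \<inter> cl k' = {}" if "k \<in> R" "k' \<in> R" "k \<noteq> k'" for k k'
  proof (rule ccontr)
    assume "cl k \<inter> cl k' \<noteq> {}"
    then obtain l where l: "l \<in> cl k" "l \<in> cl k'" by auto
    have kJ: "k \<in> Jst" "k' \<in> Jst" using that Rsub by auto
    have "b l / a l = b k / a k" using l(1) clJ[OF kJ(1)] by simp
    moreover have "b l / a l = b k' / a k'" using l(2) clJ[OF kJ(2)] by simp
    ultimately have "b k / a k = b k' / a k'" by simp
    then have "cl k = cl k'" using clJ[OF kJ(1)] clJ[OF kJ(2)] by simp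
    moreover have "k \<in> {1..r}" "k' \<in> {1..r}" using that by (auto simp: R_def)
    then have "cl k \<noteq> cl k'" using labels(3) \<open>k \<noteq> k'\<close> unfolding cl_def by (meson inj_onD)
    ultimately show False by simp
  qed
  have finR: "finite R" by (simp add: R_def)
  have fincl: "finite (cl k)" for k by (auto simp: cl_def cls_def)
  have Yeq: "Y l t = Y k t" if k: "k \<in> R" and l: "l \<in> cl k" for k l t
  proof -
    have kJ: "k \<in> Jst" using k Rsub by auto
    have lJ: "l \<in> Jst" and rho: "b l / a l = b k / a k" using clJ[OF kJ] l by auto
    define \<rho> where "\<rho> = b k / a k"
    have al: "a l \<noteq> 0" and ak: "a k \<noteq> 0" using lJ kJ by (auto simp: Jst_eq)
    have bl: "b l = a l * \<rho>" using rho al by (simp add: \<rho>_def field_simps)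
    have bk: "b k = a k * \<rho>" using ak by (simp add: \<rho>_def field_simps)
    have ls: "l \<in> {1..s}" and ks: "k \<in> {1..s}" using lJ kJ Jsub by auto
    have el: "x l = a l * x 1 + b l" and ek: "x k = a k * x 1 + b k" using xlin ls ks by blast+
    have "x l > 0" "x k > 0" using xpos ls ks by blast+
    then have pl: "a l * (x 1 + \<rho>) > 0" and pk: "a k * (x 1 + \<rho>) > 0"
      unfolding distrib_left using el ek bl bk by linarith+
    have sg: "a l / \<bar>a l\<bar> = a k / \<bar>a k\<bar>"
    proof (cases "x 1 + \<rho> > 0")
      case True
      then have "a l > 0" "a k > 0" using pl pk zero_less_mult_pos2 by (metis, metis)
      then show ?thesis by simp
    next
      case False
      then have "x 1 + \<rho> < 0" using pl by (cases "x 1 + \<rho> = 0") auto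
      then have "a l < 0" "a k < 0" using pl pk by (auto simp: zero_less_mult_iff)
      then show ?thesis by simp
    qed
    have "Y l t = a l / \<bar>a l\<bar> * (t + \<rho>)" using YJ[OF lJ] bl al by (simp add: field_simps)
    also have "\<dots> = a k / \<bar>a k\<bar> * (t + \<rho>)" using sg by simp
    also have "\<dots> = Y k t" using YJ[OF kJ] bk ak by (simp add: field_simps)
    finally show ?thesis .
  qed
  have F4: "(\<Prod>l\<in>Jst. Y l t ^ \<alpha> l j) = (\<Prod>k\<in>R. Y k t ^ (\<Sum>l\<in>cl k. \<alpha> l j))" for t j
  proof -
    have "(\<Prod>l\<in>Jst. Y l t ^ \<alpha> l j) = (\<Prod>k\<in>R. \<Prod>l\<in>cl k. Y l t ^ \<alpha> l j)"
      unfolding cover by (rule prod.UNION_disjoint[OF finR]) (auto simp: fincl disj)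
    also have "\<dots> = (\<Prod>k\<in>R. \<Prod>l\<in>cl k. Y k t ^ \<alpha> l j)"
      by (rule prod.cong[OF refl], rule prod.cong[OF refl]) (simp add: Yeq)
    also have "\<dots> = (\<Prod>k\<in>R. Y k t ^ (\<Sum>l\<in>cl k. \<alpha> l j))"
      by (simp add: power_sum)
    finally show ?thesis .
  qed
  have F5: "(\<Sum>l\<in>cl k. \<alpha> l j) = ph k + gm k j" if "j \<in> {1..m}" for k j
  proof -
    have "ph k \<le> (\<Sum>l\<in>cl k. \<alpha> l j)"
      unfolding ph_def phi_def cl_def using that by (intro Min_le) auto
    then show ?thesis by (simp add: gm_def gam_def ph_def cl_def)
  qed
  have HR: "H \<subseteq> R" by (auto simp: H_def Hset_def R_def Jst_def)
  have F6: "gm k j = gm k 1" if "k \<in> R - H" "j \<in> {1..m}" for k j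
  proof -
    have "k \<in> {1..r} \<inter> Jset \<alpha> \<beta> s" "k \<notin> Hset \<alpha> \<beta> s m r c" using that by (auto simp: R_def Jst_def H_def)
    then have "\<forall>j\<in>{1..m}. \<forall>j'\<in>{1..m}. gam \<alpha> \<beta> s m c k j = gam \<alpha> \<beta> s m c k j'"
      unfolding Hset_def by blast
    moreover have "(1::nat) \<in> {1..m}" using \<open>m \<ge> 1\<close> by simp
    ultimately show ?thesis using that(2) unfolding gm_def by blast
  qed
  define P where "P = (\<lambda>t. (\<Prod>k\<in>R. Y k t ^ ph k) * (\<Prod>k\<in>R-H. Y k t ^ gm k 1))"
  have F7: "(\<Prod>k\<in>R. Y k t ^ (ph k + gm k j)) = P t * (\<Prod>k\<in>H. Y k t ^ gm k j)" if j: "j \<in> {1..m}" for t j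
  proof -
    have "(\<Prod>k\<in>R. Y k t ^ (ph k + gm k j)) = (\<Prod>k\<in>R. Y k t ^ ph k) * (\<Prod>k\<in>R. Y k t ^ gm k j)"
      by (simp add: power_add prod.distrib)
    also have "(\<Prod>k\<in>R. Y k t ^ gm k j) = (\<Prod>k\<in>R-H. Y k t ^ gm k j) * (\<Prod>k\<in>H. Y k t ^ gm k j)"
      by (rule prod.subset_diff[OF HR finR])
    also have "(\<Prod>k\<in>R-H. Y k t ^ gm k j) = (\<Prod>k\<in>R-H. Y k t ^ gm k 1)"
      by (rule prod.cong[OF refl]) (simp add: F6[OF _ j])
    finally show ?thesis by (simp add: P_def mult_ac)
  qed
  have gq: "gfun \<alpha> \<beta> s m lam \<kappa> c t = P t * qfun \<alpha> \<beta> s m r lam c \<kappa> t" for t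
  proof -
    have "gfun \<alpha> \<beta> s m lam \<kappa> c t = S1 * (\<Sum>j=1..m. lam j * \<kappa> j * (\<Prod>l=1..s. (a l * t + b l) ^ \<alpha> l j))"
      by (simp add: gform)
    also have "\<dots> = S1 * (\<Sum>j=1..m. P t * (lam j * \<kappa> j * Ccoef \<alpha> \<beta> s c j * (\<Prod>k\<in>H. Y k t ^ gm k j)))"
    proof (intro arg_cong[where f="\<lambda>z. S1 * z"] sum.cong refl)
      fix j assume j: "j \<in> {1..m}"
      have "(\<Prod>l=1..s. (a l * t + b l) ^ \<alpha> l j) = Ccoef \<alpha> \<beta> s c j * (\<Prod>k\<in>R. Y k t ^ (ph k + gm k j))"
        using F1 F4 F5[OF j] by simp
      also have "\<dots> = Ccoef \<alpha> \<beta> s c j * (P t * (\<Prod>k\<in>H. Y k t ^ gm k j))" using F7[OF j] by simp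
      finally show "lam j * \<kappa> j * (\<Prod>l=1..s. (a l * t + b l) ^ \<alpha> l j) = P t * (lam j * \<kappa> j * Ccoef \<alpha> \<beta> s c j * (\<Prod>k\<in>H. Y k t ^ gm k j))"
        by (simp add: mult_ac)
    qed
    also have "\<dots> = P t * qfun \<alpha> \<beta> s m r lam c \<kappa> t"
      by (simp add: qfun_def S1_def H_def Y_def gm_def sum_distrib_left mult_ac)
    finally show ?thesis .
  qed
  have Ppos: "P (x 1) > 0"
    unfolding P_def using Ypos Rsub by (intro mult_pos_pos prod_pos) auto
  have g0: "gfun \<alpha> \<beta> s m lam \<kappa> c (x 1) = 0"
  proof -
    have "gfun \<alpha> \<beta> s m lam \<kappa> c (x 1) = S1 * (\<Sum>j=1..m. lam j * \<kappa> j * (\<Prod>l=1..s. x l ^ \<alpha> l j))"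
      unfolding gform by (intro arg_cong[where f="\<lambda>z. S1 * z"] sum.cong refl arg_cong2[where f=times] prod.cong)
        (metis xlin)
    also have "\<dots> = rfun \<alpha> \<beta> s m \<kappa> x 1"
      unfolding rfun_def sum_distrib_left
    proof (rule sum.cong[OF refl])
      fix j assume "j \<in> {1..m}"
      then have "stoich \<alpha> \<beta> 1 j = lam j * S1" using st[of 1 j] \<open>s \<ge> 1\<close> by (simp add: v_def S1_def)
      then show "S1 * (lam j * \<kappa> j * (\<Prod>l=1..s. x l ^ \<alpha> l j)) = stoich \<alpha> \<beta> 1 j * (\<kappa> j * (\<Prod>l=1..s. x l ^ \<alpha> l j))"
        by simp
    qed
    also have "\<dots> = 0" using ss \<open>s \<ge> 1\<close> by (simp add: steady_state_def)
    finally show ?thesis .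
  qed
  have q0: "qfun \<alpha> \<beta> s m r lam c \<kappa> (x 1) = 0" using g0 gq[of "x 1"] Ppos by simp
  have qform: "qfun \<alpha> \<beta> s m r lam c \<kappa> = (\<lambda>t. S1 * (\<Sum>j=1..m. lam j * \<kappa> j * Ccoef \<alpha> \<beta> s c j * (\<Prod>k\<in>H. (pp k * t + qq k) ^ gm k j)))"
    by (rule ext) (simp add: qfun_def S1_def H_def gm_def Yaff[symmetric] Y_def)
  obtain DQ where DQ: "(qfun \<alpha> \<beta> s m r lam c \<kappa> has_real_derivative DQ) (at (x 1))"
  proof -
    have "\<exists>D. (qfun \<alpha> \<beta> s m r lam c \<kappa> has_real_derivative D) (at (x 1))"
      unfolding qform
      apply (rule exI)
      apply (rule DERIV_cmult)
      apply (rule DERIV_sum)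
      apply (rule DERIV_cmult)
      apply (rule DL)
      done
    then show ?thesis using that by blast
  qed
  obtain DP where DP: "(P has_real_derivative DP) (at (x 1))"
  proof -
    have "\<exists>D. (P has_real_derivative D) (at (x 1))"
      unfolding P_def Yaff
      apply (rule exI)
      apply (rule DERIV_mult)
      apply (rule DL)
      apply (rule DL)
      done
    then show ?thesis using that by blast
  qed
  have "((\<lambda>t. P t * qfun \<alpha> \<beta> s m r lam c \<kappa> t) has_real_derivative
      DP * qfun \<alpha> \<beta> s m r lam c \<kappa> (x 1) + P (x 1) * DQ) (at (x 1))"
    by (rule DERIV_cong[OF DERIV_mult[OF DP DQ]]) (simp add: mult.commute)
  then have "(gfun \<alpha> \<beta> s m lam \<kappa> c has_real_derivative P (x 1) * DQ) (at (x 1))"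
  proof -
    have "gfun \<alpha> \<beta> s m lam \<kappa> c = (\<lambda>t. P t * qfun \<alpha> \<beta> s m r lam c \<kappa> t)" using gq by (rule ext)
    then show ?thesis using \<open>((\<lambda>t. P t * qfun \<alpha> \<beta> s m r lam c \<kappa> t) has_real_derivative _) _\<close> q0 by simp
  qed
  then have TPQ: "T = P (x 1) * DQ" using gder by (rule DERIV_unique[symmetric])
  have dq: "deriv (qfun \<alpha> \<beta> s m r lam c \<kappa>) (x 1) = DQ" using DQ by (rule DERIV_imp_deriv)
  show ?thesis
    unfolding dg dq stab TPQ using Ppos
    by (auto simp: sgn_mult mult_less_0_iff)
qed

end
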